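(* Let $n\ge3$ and $B_n=\langle a,b\mid ba=b^n\rangle$. 1. $\rho(B_n)=n-1>\rho(L)$ for every $L\in\mathcal L(B_n)$. 2. For every $\ell\ge2$, \[\mathcal U_\ell(B_n)=\ell-q_{\ell,n}(n-2)+(n-2)\cdot[0,\,q_{\ell,n}+\ell-1],\] where $q_{\ell,n}=\lfloor \ell/(n-1)\rfloor$ if $(n-1)\nmid \ell$ and $q_{\ell,n}=\frac{\ell}{n-1}-1$ if $(n-1)\mid\ell$.
   Context: $B_n$ is the monoid with generators $a,b$ and the single relation $ba=b^n$; it is reduced and atomic with atoms $a,b$. $\mathsf L(y)$ is the set of all $k$ such that $y$ is a product of $k$ atoms ($\mathsf L(1)=\{0\}$), $\mathcal L(B_n)=\{\mathsf L(y)\}$. For $L\subset\mathbb N_0$, $\rho(L)=\sup(L\cap\mathbb N)/\min(L\cap\mathbb N)$ if $L\cap\mathbb N\ne\emptyset$ and $\rho(L)=1$ otherwise; $\rho(B_n)=\sup_{L\in\mathcal L(B_n)}\rho(L)$. $\mathcal U_\ell(B_n)=\bigcup\{L\in\mathcal L(B_n)\mid \ell\in L\}$. Notation: $m+d\cdot[0,q]=\{m,m+d,\dots,m+qd\}$. *)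

theory Defs
  imports Complex_Main "HOL-Library.Extended_Real"
begin

text \<open>Generators of the monoid B_n = < a, b | b a = b^n >.  Elements of B_n are
  words over {a,b} modulo the congruence generated by the defining relation.\<close>

datatype gen = GA | GB

definition Bstep :: "nat \<Rightarrow> gen list \<Rightarrow> gen list \<Rightarrow> bool" where
  "Bstep n u v \<longleftrightarrow> (\<exists>x y. u = x @ [GB, GA] @ y \<and> v = x @ replicate n GB @ y)"

definition Beq :: "nat \<Rightarrow> gen list \<Rightarrow> gen list \<Rightarrow> bool" where
  "Beq n = equivclp (Bstep n)"

text \<open>Length set of the element represented by the word w: since the atoms of B_n are
  exactly a and b, factorizations into atoms are exactly words representing the element.\<close>
definition Lset :: "nat \<Rightarrow> gen list \<Rightarrow> nat set" where
  "Lset n w = {length v | v. Beq n w v}"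

definition calL :: "nat \<Rightarrow> nat set set" where
  "calL n = {Lset n w | w. True}"

definition rhoL :: "nat set \<Rightarrow> ereal" where
  "rhoL L = (if L - {0} \<noteq> {}
             then (SUP k\<in>L - {0}. ereal (real k)) / ereal (real (Min (L - {0})))
             else 1)"

definition rhoB :: "nat \<Rightarrow> ereal" where
  "rhoB n = (SUP L\<in>calL n. rhoL L)"

definition calU :: "nat \<Rightarrow> nat \<Rightarrow> nat set" where
  "calU n l = \<Union> {L \<in> calL n. l \<in> L}"

definition qln :: "nat \<Rightarrow> nat \<Rightarrow> nat" where
  "qln l n = (if (n - 1) dvd l then l div (n - 1) - 1 else l div (n - 1))"

end

theory Submission
  imports Defs
begin


fun nf :: "nat \<Rightarrow> gen list \<Rightarrow> nat \<times> nat" where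
  "nf n [] = (0,0)"
| "nf n (GA # w) = (Suc (fst (nf n w)), snd (nf n w))"
| "nf n (GB # w) = (0, Suc (fst (nf n w) * (n - 1) + snd (nf n w)))"

lemma nf_append: "nf n w = nf n w' \<Longrightarrow> nf n (x @ w) = nf n (x @ w')"
proof (induction x)
  case (Cons a x) then show ?case by (cases a) auto
qed simp

lemma nf_repB: "k > 0 \<Longrightarrow> nf n (replicate k GB @ y) = (0, k + fst (nf n y) * (n - 1) + snd (nf n y))"
proof (induction k)
  case (Suc k) then show ?case by (cases k) auto
qed simp

lemma nf_repA: "nf n (replicate k GA @ y) = (k + fst (nf n y), snd (nf n y))"
  by (induction k) auto

lemma Bstep_nf: assumes "n \<ge> 1" "Bstep n u v" shows "nf n u = nf n v"
proof -
  obtain x y where u: "u = x @ [GB, GA] @ y" and v: "v = x @ replicate n GB @ y"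
    using assms(2) unfolding Bstep_def by blast
  have r: "nf n (replicate n GB @ y) = (0, n + fst (nf n y) * (n - 1) + snd (nf n y))"
    using assms(1) by (intro nf_repB) auto
  have e: "n + fst (nf n y) * (n - 1) + snd (nf n y) = Suc (Suc (fst (nf n y)) * (n - 1) + snd (nf n y))"
    using assms(1) by (cases n) auto
  have "nf n ([GB, GA] @ y) = nf n (replicate n GB @ y)"
    by (simp only: r e) simp
  then show ?thesis unfolding u v by (rule nf_append)
qed

lemma Beq_nf: assumes "n \<ge> 1" "Beq n u v" shows "nf n u = nf n v"
  using assms(2) unfolding Beq_def
proof (induction rule: equivclp_induct)
  case (step y z) then show ?case using Bstep_nf[OF assms(1)] by metis
qed simp

lemma equivclp_map:
  assumes "\<And>u v. r u v \<Longrightarrow> r (f u) (f v)" "equivclp r a b"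
  shows "equivclp r (f a) (f b)"
  using assms(2)
proof (induction rule: equivclp_induct)
  case base then show ?case by (simp add: equivclp_def)
next
  case (step y z)
  have "equivclp r (f y) (f z)"
    using step(2) assms(1)
    by (metis equivclp_sym r_into_rtranclp rtranlcp_le_equivclp predicate2D)
  then show ?case using step(3) transpD[OF transp_equivclp] by metis
qed

lemma Bstep_prefix: "Bstep n u v \<Longrightarrow> Bstep n (x @ u) (x @ v)"
  unfolding Bstep_def by (metis append.assoc)

lemma Beq_prefix: "Beq n u v \<Longrightarrow> Beq n (x @ u) (x @ v)"
  unfolding Beq_def
  by (rule equivclp_map[where f = "\<lambda>w. x @ w"]) (auto simp: Bstep_prefix)

lemma Beq_refl: "Beq n u u" unfolding Beq_def by (simp add: equivclp_def)
lemma Beq_sym: "Beq n u v \<Longrightarrow> Beq n v u" unfolding Beq_def by (rule equivclp_sym)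
lemma Beq_trans: "Beq n u v \<Longrightarrow> Beq n v w \<Longrightarrow> Beq n u w"
  unfolding Beq_def using transpD[OF transp_equivclp] by metis
lemma Bstep_Beq: "Bstep n u v \<Longrightarrow> Beq n u v"
  unfolding Beq_def by (metis r_into_rtranclp rtranlcp_le_equivclp predicate2D)

lemma Beq_BA: assumes "n \<ge> 1"
  shows "Beq n (GB # replicate i GA @ replicate j GB) (replicate (Suc (i * (n - 1) + j)) GB)"
proof (induction i)
  case 0 then show ?case by (simp add: Beq_refl)
next
  case (Suc i)
  have "Bstep n (GB # replicate (Suc i) GA @ replicate j GB) (replicate n GB @ replicate i GA @ replicate j GB)"
    unfolding Bstep_def by (rule exI[of _ "[]"]) auto
  moreover have "replicate n GB @ replicate i GA @ replicate j GB = replicate (n - 1) GB @ (GB # replicate i GA @ replicate j GB)"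
    using assms by (cases n) (auto simp: replicate_append_same)
  moreover have "Beq n (replicate (n - 1) GB @ (GB # replicate i GA @ replicate j GB)) (replicate (n - 1) GB @ replicate (Suc (i * (n - 1) + j)) GB)"
    by (rule Beq_prefix[OF Suc])
  moreover have "replicate (n - 1) GB @ replicate (Suc (i * (n - 1) + j)) GB = replicate (Suc (Suc i * (n - 1) + j)) GB"
  proof -
    have eq: "n - 1 + Suc (i * (n - 1) + j) = Suc (Suc i * (n - 1) + j)" by simp
    show ?thesis by (metis replicate_add eq)
  qed
  ultimately show ?case using Bstep_Beq Beq_trans by metis
qed

lemma canon: assumes "n \<ge> 1"
  shows "Beq n w (replicate (fst (nf n w)) GA @ replicate (snd (nf n w)) GB)"
proof (induction w)
  case Nil then show ?case by (simp add: Beq_refl)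
next
  case (Cons c w)
  show ?case
  proof (cases c)
    case GA then show ?thesis using Beq_prefix[OF Cons, of "[GA]"] by simp
  next
    case GB then show ?thesis using Beq_prefix[OF Cons, of "[GB]"] Beq_BA[OF assms] Beq_trans by simp
  qed
qed

lemma Beq_iff: assumes "n \<ge> 1" shows "Beq n u v \<longleftrightarrow> nf n u = nf n v"
proof
  assume "nf n u = nf n v"
  then show "Beq n u v" using canon[OF assms, of u] canon[OF assms, of v] Beq_sym Beq_trans by metis
qed (rule Beq_nf[OF assms])



lemma nf_len: "nf (Suc (Suc d)) v = (i,j) \<Longrightarrow> (j = 0 \<longrightarrow> length v = i) \<and> (j > 0 \<longrightarrow> (\<exists>m. m*(d+1) < j \<and> length v + m*d = i+j))"
proof (induction v arbitrary: i j)
  case Nil then show ?case by simp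
next
  case (Cons c v)
  obtain i' j' where v: "nf (Suc (Suc d)) v = (i', j')" by fastforce
  note IH = Cons.IH[OF v]
  show ?case
  proof (cases c)
    case GA
    then have "i = Suc i'" "j = j'" using Cons.prems v by auto
    then show ?thesis using IH by auto
  next
    case GB
    then have ij: "i = 0" "j = Suc (i' * (d+1) + j')" using Cons.prems v by auto
    show ?thesis
    proof (cases "j' = 0")
      case True
      then have "length v = i'" using IH by simp
      then have "i' * (d+1) < j \<and> length (c#v) + i' * d = i + j" using ij True by (simp add: algebra_simps)
      then show ?thesis using ij by blast
    next
      case False
      then obtain m where m: "m*(d+1) < j'" "length v + m*d = i'+j'" using IH by auto
      have "(m + i') * (d+1) < j" using m ij by (simp add: algebra_simps)
      moreover have "length (c#v) + (m + i') * d = i + j" using m ij by (simp add: algebra_simps)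
      ultimately show ?thesis using ij by blast
    qed
  qed
qed

lemma nf_repGB: "nf n (replicate k GB) = (0, k)"
  by (induction k) auto

lemma nf_word:
  assumes "m*(d+1) < j"
  shows "nf (Suc (Suc d)) (replicate i GA @ GB # replicate m GA @ replicate (j - 1 - m*(d+1)) GB) = (i,j)"
    and "length (replicate i GA @ GB # replicate m GA @ replicate (j - 1 - m*(d+1)) GB) + m*d = i + j"
  using assms by (auto simp: nf_repA nf_repGB algebra_simps)

definition LS :: "nat \<Rightarrow> nat \<Rightarrow> nat \<Rightarrow> nat set" where
  "LS d i j = {length v | v. nf (Suc (Suc d)) v = (i,j)}"

lemma LS_0: "LS d i 0 = {i}"
proof -
  have "nf (Suc (Suc d)) (replicate i GA) = (i, 0)" using nf_repA[of _ i "[]"] by simp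
  then show ?thesis unfolding LS_def using nf_len[of d _ i 0] by force
qed

lemma LS_pos: "j > 0 \<Longrightarrow> LS d i j = {x. \<exists>m. m*(d+1) < j \<and> x + m*d = i+j}"
  unfolding LS_def
  apply (rule set_eqI)
  apply safe
  subgoal using nf_len by blast
  subgoal for x m using nf_word[of m d j i] by (metis add_right_cancel)
  done

lemma Lset_LS: "Lset (Suc (Suc d)) w = LS d (fst (nf (Suc (Suc d)) w)) (snd (nf (Suc (Suc d)) w))"
  unfolding Lset_def LS_def using Beq_iff[of "Suc (Suc d)"] by auto

lemma calL_LS: "calL (Suc (Suc d)) = {LS d i j | i j. True}"
proof -
  have "\<exists>w. nf (Suc (Suc d)) w = (i, j)" for i j
    using nf_repA[of _ i "replicate j GB"] nf_repGB by auto
  then show ?thesis unfolding calL_def using Lset_LS by (auto, metis fst_conv snd_conv)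
qed



lemma qln_eq: "l \<ge> 1 \<Longrightarrow> qln l (Suc (Suc d)) = (l - 1) div (d + 1)"
proof -
  assume "l \<ge> 1"
  then obtain p where p: "l = Suc p" by (cases l) auto
  show ?thesis unfolding qln_def p using div_Suc[of p "Suc d"] by (auto simp: dvd_eq_mod_eq_0)
qed

lemma calU_LS: "calU (Suc (Suc d)) l = \<Union> {LS d i j | i j. l \<in> LS d i j}"
  unfolding calU_def calL_LS by blast

lemma U_main:
  assumes "l \<ge> 1" and q: "q = (l - 1) div (d + 1)"
  shows "\<Union> {LS d i j | i j. l \<in> LS d i j} = {l - q * d + d * k | k. k \<le> q + l - 1}"
proof -
  have qle: "q * (d+1) \<le> l - 1" unfolding q by (rule div_times_less_eq_dividend)
  then have qd: "q * d \<le> l" by (simp add: algebra_simps)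
  have qmax: "t \<le> q" if "t * (d+1) \<le> l - 1" for t
    unfolding q using that less_eq_div_iff_mult_less_eq[of "d+1" t "l-1"] by simp
  show ?thesis
  proof (rule set_eqI, rule iffI)
    fix x assume "x \<in> \<Union> {LS d i j | i j. l \<in> LS d i j}"
    then obtain i j where x: "x \<in> LS d i j" and l: "l \<in> LS d i j" by blast
    show "x \<in> {l - q * d + d * k | k. k \<le> q + l - 1}"
    proof (cases "j = 0")
      case True
      then have "x = l" using x l LS_0 by simp
      then have "x = l - q * d + d * q" using qd by (simp add: algebra_simps)
      moreover have "q \<le> q + l - 1" using assms(1) by simp
      ultimately show ?thesis by blast
    next
      case False
      then obtain m1 m2 where m1: "m1*(d+1) < j" "x + m1*d = i+j"
        and m2: "m2*(d+1) < j" "l + m2*d = i+j" using x l LS_pos by auto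
      show ?thesis
      proof (cases "m2 \<le> m1")
        case True
        then obtain t where t: "m1 = m2 + t" using le_Suc_ex by blast
        have "t * (d+1) \<le> l - 1" using m1 m2 unfolding t by (simp add: algebra_simps)
        then have tq: "t \<le> q" by (rule qmax)
        have "x = l - t * d" using m1 m2 unfolding t by (simp add: algebra_simps)
        also have "\<dots> = l - q * d + d * (q - t)"
          using tq qd mult_le_mono1[OF tq, of d] by (simp add: diff_mult_distrib2 algebra_simps)
        finally have "x = l - q * d + d * (q - t)" .
        moreover have "q - t \<le> q + l - 1" using assms(1) by simp
        ultimately show ?thesis by blast
      next
        case False
        then obtain t where t: "m2 = m1 + t" using le_Suc_ex[of m1 m2] by auto
        have "t < l" using m1 m2 unfolding t by (simp add: algebra_simps)
        then have "q + t \<le> q + l - 1" by simp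
        moreover have "x = l - q * d + d * (q + t)"
          using m1 m2 qd unfolding t by (simp add: algebra_simps)
        ultimately show ?thesis by blast
      qed
    qed
  next
    fix x assume "x \<in> {l - q * d + d * k | k. k \<le> q + l - 1}"
    then obtain k where k: "k \<le> q + l - 1" and x: "x = l - q * d + d * k" by blast
    show "x \<in> \<Union> {LS d i j | i j. l \<in> LS d i j}"
    proof (cases "k \<le> q")
      case True
      have "(q - k) * (d+1) \<le> q * (d+1)" by (rule mult_le_mono1) simp
      then have "(q - k) * (d+1) < l" using qle assms(1) by linarith
      moreover have "x + (q - k) * d = 0 + l"
        using x True qd mult_le_mono1[OF True, of d] by (simp add: diff_mult_distrib algebra_simps)
      ultimately have "x \<in> LS d 0 l" using LS_pos[of l d 0] assms(1) by auto
      moreover have "l \<in> LS d 0 l" unfolding LS_pos[of l d 0, OF order.strict_trans2[OF zero_less_one assms(1)]]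
        using assms(1) by (intro CollectI exI[of _ 0]) auto
      ultimately show ?thesis by blast
    next
      case False
      then obtain t where t: "k = q + t" "t \<ge> 1" using le_Suc_ex[of q k] by auto
      have tl: "t < l" using k t assms(1) by simp
      have xe: "x = l + t * d" using x t qd by (simp add: algebra_simps)
      have "x \<in> LS d 0 (l + t*d)" using LS_pos[of "l + t*d" d 0] assms(1) xe
        by (simp, intro exI[of _ 0]) auto
      moreover have "l \<in> LS d 0 (l + t*d)" using LS_pos[of "l + t*d" d 0] assms(1) tl
        by (simp, intro exI[of _ t]) (auto simp: algebra_simps)
      ultimately show ?thesis by blast
    qed
  qed
qed



lemma LS_fin: "finite (LS d i j)"
proof (cases "j = 0")
  case True then show ?thesis by (simp add: LS_0)
next
  case False
  have "LS d i j \<subseteq> {..i+j}" using LS_pos[of j d i] False by auto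
  then show ?thesis using finite_subset by blast
qed

lemma rhoL_pos:
  assumes "j > 0"
  shows "rhoL (LS d i j) = ereal (real (i+j) / real (Min (LS d i j)))"
    and "Min (LS d i j) \<in> LS d i j" and "Min (LS d i j) > 0"
proof -
  have L: "LS d i j = {x. \<exists>m. m*(d+1) < j \<and> x + m*d = i+j}" using LS_pos[OF assms] .
  have ij: "i + j \<in> LS d i j" unfolding L using assms by (intro CollectI exI[of _ 0]) auto
  have pos: "x > 0" if "x \<in> LS d i j" for x
  proof -
    from that obtain m where "m*(d+1) < j" "x + m*d = i+j" unfolding L by blast
    then show ?thesis by (simp add: algebra_simps)
  qed
  have le: "x \<le> i + j" if "x \<in> LS d i j" for x using that L by auto
  have ne: "LS d i j - {0} = LS d i j" using pos by blast
  have nonempty: "LS d i j \<noteq> {}" using ij by blast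
  show mem: "Min (LS d i j) \<in> LS d i j" using LS_fin nonempty by simp
  show mpos: "Min (LS d i j) > 0" using pos mem by blast
  have sup: "(SUP k\<in>LS d i j. ereal (real k)) = ereal (real (i+j))"
    by (rule antisym) (auto intro!: SUP_least SUP_upper2[OF ij] dest!: le)
  show "rhoL (LS d i j) = ereal (real (i+j) / real (Min (LS d i j)))"
    unfolding rhoL_def ne using nonempty sup mpos by simp
qed

lemma rhoL_lt:
  assumes "d \<ge> 1"
  shows "rhoL (LS d i j) < ereal (real (d+1))"
proof (cases "j = 0")
  case True
  show ?thesis
  proof (cases "i = 0")
    case True
    then have "rhoL (LS d i j) = 1" using \<open>j = 0\<close> by (simp add: LS_0 rhoL_def)
    then show ?thesis using assms by simp
  next
    case False
    then have "LS d i j - {0} = {i}" using \<open>j = 0\<close> by (simp add: LS_0)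
    then have "rhoL (LS d i j) = 1" using False by (simp add: rhoL_def)
    then show ?thesis using assms by simp
  qed
next
  case False
  then have j: "j > 0" by simp
  define x where "x = Min (LS d i j)"
  have x: "x \<in> LS d i j" "x > 0" using rhoL_pos[OF j] unfolding x_def by auto
  obtain m where m: "m*(d+1) < j" "x + m*d = i+j" using x(1) LS_pos[OF j] by auto
  have "x > m" using m by (simp add: algebra_simps)
  then have "d * x \<ge> d * (m+1)" by (intro mult_le_mono2) simp
  then have "i + j < (d+1) * x" using m assms by (simp add: algebra_simps)
  then have "real (i+j) < real (d+1) * real x" by (metis of_nat_less_iff of_nat_mult)
  then have "real (i+j) / real x < real (d+1)" using x(2) by (simp add: divide_less_eq)
  then show ?thesis using rhoL_pos(1)[OF j, of d i] x_def by simp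
qed

lemma rhoL_witness:
  "rhoL (LS d 0 (M*(d+1)+1)) = ereal (real (M*(d+1)+1) / real (M+1))"
proof -
  have j: "M*(d+1)+1 > 0" by simp
  note L = LS_pos[OF j, of d 0]
  have mem: "M + 1 \<in> LS d 0 (M*(d+1)+1)" unfolding L
    by (intro CollectI exI[of _ M]) (auto simp: algebra_simps)
  have lb: "x \<ge> M + 1" if "x \<in> LS d 0 (M*(d+1)+1)" for x
  proof -
    from that obtain m where m: "m*(d+1) < M*(d+1)+1" "x + m*d = 0 + (M*(d+1)+1)" unfolding L by blast
    then have "m*(d+1) \<le> M*(d+1)" by simp
    then have "m \<le> M" by (metis mult_le_cancel2 zero_less_Suc Suc_eq_plus1)
    then have a: "m*d \<le> M*d" by (rule mult_le_mono1)
    have b: "x + m*d = M*d + M + 1" using m(2) by (simp add: algebra_simps)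
    from a b show ?thesis by linarith
  qed
  have "Min (LS d 0 (M*(d+1)+1)) = M + 1"
    using mem lb LS_fin by (intro Min_eqI) auto
  then show ?thesis using rhoL_pos(1)[OF j, of d 0] by simp
qed

lemma rhoB_eq:
  assumes "d \<ge> 1"
  shows "rhoB (Suc (Suc d)) = ereal (real (d+1))"
proof -
  have up: "rhoL L \<le> rhoB (Suc (Suc d))" if "L \<in> calL (Suc (Suc d))" for L
    unfolding rhoB_def using that by (rule SUP_upper)
  have "rhoB (Suc (Suc d)) \<le> ereal (real (d+1))"
    unfolding rhoB_def
  proof (rule SUP_least)
    fix L assume "L \<in> calL (Suc (Suc d))"
    then obtain i j where "L = LS d i j" unfolding calL_LS by blast
    then show "rhoL L \<le> ereal (real (d+1))" using rhoL_lt[OF assms, of i j] by simp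
  qed
  moreover have "\<not> rhoB (Suc (Suc d)) < ereal (real (d+1))"
  proof
    assume lt: "rhoB (Suc (Suc d)) < ereal (real (d+1))"
    have w: "ereal (real (M*(d+1)+1) / real (M+1)) \<le> rhoB (Suc (Suc d))" for M
    proof -
      have "LS d 0 (M*(d+1)+1) \<in> calL (Suc (Suc d))" unfolding calL_LS by blast
      from up[OF this] show ?thesis unfolding rhoL_witness .
    qed
    from w[of 0] have "ereal 1 \<le> rhoB (Suc (Suc d))" by simp
    then obtain r where r: "rhoB (Suc (Suc d)) = ereal r" using lt by (cases "rhoB (Suc (Suc d))") auto
    have r1: "r < real (d+1)" using lt r by simp
    obtain M :: nat where M: "real d / (real (d+1) - r) < real M" using reals_Archimedean2 by blast
    have pos: "real (d+1) - r > 0" using r1 by simp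
    have "real d < real M * (real (d+1) - r)" using M pos by (simp add: divide_less_eq)
    then have h: "real d < (real M + 1) * (real (d+1) - r)" using pos by (simp add: distrib_right)
    have "r * (real M + 1) < real (M*(d+1)+1)"
    proof -
      have e: "real (M*(d+1)+1) = (real M + 1) * real (d+1) - real d" by (simp add: algebra_simps)
      show ?thesis unfolding e using h by (simp add: algebra_simps)
    qed
    then have "r * real (M+1) < real (M*(d+1)+1)" by (simp add: add.commute)
    then have "r < real (M*(d+1)+1) / real (M+1)" by (simp only: pos_less_divide_eq of_nat_0_less_iff zero_less_Suc Suc_eq_plus1[symmetric])
    then show False using w[of M] r by simp
  qed
  ultimately show ?thesis by simp
qed


theorem corollary4p3:
  fixes n :: nat
  assumes "n \<ge> 3"
  shows "rhoB n = ereal (real (n - 1)) \<and> (\<forall>L\<in>calL n. rhoL L < rhoB n) \<and>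
         (\<forall>l\<ge>2. calU n l =
           {l - qln l n * (n - 2) + (n - 2) * k | k. k \<le> qln l n + l - 1})"
proof -
  define d where "d = n - 2"
  have n: "n = Suc (Suc d)" and d: "d \<ge> 1" using assms unfolding d_def by auto
  have n1: "n - 1 = d + 1" and n2: "n - 2 = d" using n by auto
  have R: "rhoB n = ereal (real (n - 1))" unfolding n1 unfolding n using rhoB_eq[OF d] .
  have L: "\<forall>L\<in>calL n. rhoL L < rhoB n"
  proof
    fix L assume "L \<in> calL n"
    then obtain i j where "L = LS d i j" unfolding n calL_LS by blast
    then show "rhoL L < rhoB n" using rhoB_eq[OF d] rhoL_lt[OF d, of i j] unfolding n by simp
  qed
  have U: "calU n l = {l - qln l n * (n - 2) + (n - 2) * k | k. k \<le> qln l n + l - 1}" if "l \<ge> 2" for l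
  proof -
    have l1: "l \<ge> 1" using that by simp
    have q: "qln l n = (l - 1) div (d + 1)" unfolding n using qln_eq[OF l1] .
    show ?thesis unfolding n2 unfolding n calU_LS
      using U_main[OF l1 q[unfolded n]] by simp
  qed
  show ?thesis using R L U by blast
qed

end
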